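(* Let $\delta\in[1/3,1]$, $\alpha>0$ with $\alpha\delta<1$, $\eta_0^{2}=\frac{1+\alpha^{2}}{1+\delta^{2}}$, and let $x\mapsto B_0(x)$ be a continuous function with values in $[0,\sqrt{1-\eta_0^2\delta^2}]$. Set $\widetilde{A_\ast}(x)=\sqrt{1-(1+\delta^2)B_0(x)^2}$ and let $\lambda_r(x),\lambda_i(x)\ge0$ be defined by $2\lambda_r^{2}=\sqrt2\,\widetilde{A_\ast}+\varepsilon^{2}B_0^{2}(1+\delta^{2})^{2}$, $2\lambda_i^{2}=\sqrt2\,\widetilde{A_\ast}-\varepsilon^{2}B_0^{2}(1+\delta^{2})^{2}$. Let $\mathbf S_0(x,s)$, $\mathbf S_1(x,s)$ be the solution (monodromy) operators on $\mathbb{R}^2$ of $X'=\mathbf L_0(x)X$ and $Y'=\mathbf L_1(x)Y$, where $$\mathbf L_0=\begin{pmatrix}\lambda_r&\lambda_i\\-\lambda_i&\lambda_r\end{pmatrix},\qquad \mathbf L_1=\begin{pmatrix}-\lambda_r&\lambda_i\\-\lambda_i&-\lambda_r\end{pmatrix},$$ i.e. $\partial_x\mathbf S_j(x,s)=\mathbf L_j(x)\mathbf S_j(x,s)$, $\mathbf S_j(x,x)=\mathbb I$. If $\alpha\ge\frac{10}{3}\varepsilon^2$ and $\varepsilon>0$ is small enough, then, with $\sigma=\frac{(\alpha\delta)^{1/2}}{2^{1/4}}$ and the operator norm induced by the Euclidean norm, $$\|\mathbf S_0(x,s)\|\le e^{\sigma(x-s)}\ \text{ for } x<s,\qquad \|\mathbf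 S_1(x,s)\|\le e^{-\sigma(x-s)}\ \text{ for } s<x.$$ *)

theory Defs
  imports "HOL-Analysis.Analysis"
begin

definition mat2 :: "real \<Rightarrow> real \<Rightarrow> real \<Rightarrow> real \<Rightarrow> real^2^2" where
  "mat2 a b c d = (\<chi> i j. if i = 1 then (if j = 1 then a else b) else (if j = 1 then c else d))"

definition L0 :: "(real \<Rightarrow> real) \<Rightarrow> (real \<Rightarrow> real) \<Rightarrow> real \<Rightarrow> real^2^2" where
  "L0 lr li x = mat2 (lr x) (li x) (- li x) (lr x)"

definition L1 :: "(real \<Rightarrow> real) \<Rightarrow> (real \<Rightarrow> real) \<Rightarrow> real \<Rightarrow> real^2^2" where
  "L1 lr li x = mat2 (- lr x) (li x) (- li x) (- lr x)"

definition is_solution_operator :: "(real \<Rightarrow> real^2^2) \<Rightarrow> (real \<Rightarrow> real \<Rightarrow> real^2^2) \<Rightarrow> bool" where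
  "is_solution_operator L S \<longleftrightarrow>
     (\<forall>s. S s s = mat 1 \<and> (\<forall>x. ((\<lambda>y. S y s) has_vector_derivative (L x ** S x s)) (at x)))"

definition opnorm :: "real^2^2 \<Rightarrow> real" where
  "opnorm M = onorm (\<lambda>v. M *v v)"

end

theory Submission
  imports Defs
begin

lemma bl_comp: "bounded_linear (\<lambda>M::real^2^2. (M *v v) $ i)"
  by (auto simp: matrix_vector_mult_def sum_2 intro!: bounded_linear_intros
     bounded_linear_compose[OF bounded_linear_vec_nth bounded_linear_vec_nth])

lemma norm2: "norm (v::real^2) = sqrt ((v$1)^2 + (v$2)^2)" by (simp add: norm_vec_def L2_set_def sum_2)

lemma comp_deriv:
  assumes "is_solution_operator (\<lambda>x. mat2 (a x) (b x) (- b x) (a x)) S"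
  shows "((\<lambda>t. (S t s *v v) $ 1) has_real_derivative a x * (S x s *v v)$1 + b x * (S x s *v v)$2) (at x)"
    "((\<lambda>t. (S t s *v v) $ 2) has_real_derivative - b x * (S x s *v v)$1 + a x * (S x s *v v)$2) (at x)"
proof -
  have d: "((\<lambda>y. S y s) has_vector_derivative (mat2 (a x) (b x) (- b x) (a x) ** S x s)) (at x)"
    using assms unfolding is_solution_operator_def by blast
  have e: "(mat2 (a x) (b x) (- b x) (a x) ** S x s *v v) = mat2 (a x) (b x) (- b x) (a x) *v (S x s *v v)"
    by (simp add: matrix_vector_mul_assoc)
  show "((\<lambda>t. (S t s *v v) $ 1) has_real_derivative a x * (S x s *v v)$1 + b x * (S x s *v v)$2) (at x)"
    using bounded_linear.has_vector_derivative[OF bl_comp[of v 1] d]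
    unfolding has_real_derivative_iff_has_vector_derivative e
    by (simp add: mat2_def matrix_vector_mult_def sum_2)
  show "((\<lambda>t. (S t s *v v) $ 2) has_real_derivative - b x * (S x s *v v)$1 + a x * (S x s *v v)$2) (at x)"
    using bounded_linear.has_vector_derivative[OF bl_comp[of v 2] d]
    unfolding has_real_derivative_iff_has_vector_derivative e
    by (simp add: mat2_def matrix_vector_mult_def sum_2)
qed

lemma growth:
  assumes S: "is_solution_operator (\<lambda>x. mat2 (a x) (b x) (- b x) (a x)) S"
    and c: "\<And>x. c * a x \<ge> \<sigma>" and cc: "c = 1 \<or> c = -1"
    and xs: "c * x \<le> c * s"
  shows "opnorm (S x s) \<le> exp (\<sigma> * c * (x - s))"
  unfolding opnorm_def
proof (rule onorm_le)
  fix v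
  define y1 where "y1 t = (S t s *v v) $ 1" for t
  define y2 where "y2 t = (S t s *v v) $ 2" for t
  define h where "h t = ((y1 t)^2 + (y2 t)^2) * exp (- 2 * \<sigma> * c * t)" for t
  have hd: "(h has_real_derivative 
     (2 * y1 t * (a t * y1 t + b t * y2 t) + 2 * y2 t * (- b t * y1 t + a t * y2 t)) * exp (- 2 * \<sigma> * c * t)
      + ((y1 t)^2 + (y2 t)^2) * (exp (- 2 * \<sigma> * c * t) * (- 2 * \<sigma> * c))) (at t)" for t
    unfolding h_def y1_def y2_def
    by (auto intro!: derivative_eq_intros comp_deriv[OF S])
  have hval: "(2 * y1 t * (a t * y1 t + b t * y2 t) + 2 * y2 t * (- b t * y1 t + a t * y2 t)) * exp (- 2 * \<sigma> * c * t)
      + ((y1 t)^2 + (y2 t)^2) * (exp (- 2 * \<sigma> * c * t) * (- 2 * \<sigma> * c))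
     = 2 * c * ((y1 t)^2 + (y2 t)^2) * exp (- 2 * \<sigma> * c * t) * (c * a t - \<sigma>)" for t
    using cc by (auto simp: algebra_simps power2_eq_square)
  have hmono: "h x \<le> h s"
  proof (cases "c = 1")
    case True
    have "h x \<le> h s"
      apply (rule DERIV_nonneg_imp_nondecreasing[of x s h])
      using xs True apply simp
      apply (rule exI, rule conjI, rule hd)
      unfolding hval using c[of] True by (auto intro!: mult_nonneg_nonneg)
    then show ?thesis .
  next
    case False
    then have F: "c = -1" using cc by simp
    show "h x \<le> h s"
      apply (rule DERIV_nonpos_imp_nonincreasing[of s x h])
      using xs F apply simp
      apply (rule exI, rule conjI, rule hd)
      unfolding hval using c F by (auto intro!: mult_nonpos_nonneg)
  qed
  have hs: "h s = (norm v)^2 * exp (- 2 * \<sigma> * c * s)"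
    using S unfolding is_solution_operator_def h_def y1_def y2_def by (simp add: norm2)
  have hx: "h x = (norm (S x s *v v))^2 * exp (- 2 * \<sigma> * c * x)"
    unfolding h_def y1_def y2_def by (simp add: norm2)
  from hmono have "(norm (S x s *v v))^2 \<le> (norm v)^2 * exp (- 2 * \<sigma> * c * s) / exp (- 2 * \<sigma> * c * x)"
    unfolding hs hx by (simp add: pos_le_divide_eq)
  also have "\<dots> = (exp (\<sigma> * c * (x - s)) * norm v)^2"
  proof -
    have "exp (- 2 * \<sigma> * c * s) / exp (- 2 * \<sigma> * c * x) = exp (2 * (\<sigma> * c * (x - s)))"
      by (simp add: exp_diff[symmetric] algebra_simps)
    also have "\<dots> = (exp (\<sigma> * c * (x - s)))^2" by (rule exp_double)
    finally have E: "exp (- 2 * \<sigma> * c * s) / exp (- 2 * \<sigma> * c * x) = (exp (\<sigma> * c * (x - s)))^2" .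
    have "(norm v)^2 * exp (- 2 * \<sigma> * c * s) / exp (- 2 * \<sigma> * c * x)
       = (norm v)^2 * (exp (- 2 * \<sigma> * c * s) / exp (- 2 * \<sigma> * c * x))" by simp
    also have "\<dots> = (exp (\<sigma> * c * (x - s)) * norm v)^2" unfolding E by (simp add: power_mult_distrib)
    finally show ?thesis .
  qed
  finally show "norm (S x s *v v) \<le> exp (\<sigma> * c * (x - s)) * norm v"
    using power2_le_imp_le by force
qed

lemma sigma_le:
  assumes "1/3 \<le> (\<delta>::real)" "\<delta> \<le> 1" "0 < \<alpha>" "\<alpha> * \<delta> < 1"
    "0 \<le> B" "B \<le> sqrt (1 - (1 + \<alpha>^2) / (1 + \<delta>^2) * \<delta>^2)"
    "l \<ge> 0" "2 * l^2 = sqrt 2 * sqrt (1 - (1 + \<delta>^2) * B^2) + e^2 * B^2 * (1 + \<delta>^2)^2"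
  shows "(\<alpha> * \<delta>) powr (1/2) / 2 powr (1/4) \<le> l"
proof -
  have d: "1 + \<delta>^2 > 0" by (simp add: add_pos_nonneg)
  have "0 \<le> sqrt (1 - (1 + \<alpha>^2) / (1 + \<delta>^2) * \<delta>^2)" using assms by linarith
  then have nn: "0 \<le> 1 - (1 + \<alpha>^2) / (1 + \<delta>^2) * \<delta>^2" by simp
  have "B^2 \<le> 1 - (1 + \<alpha>^2) / (1 + \<delta>^2) * \<delta>^2"
    using power_mono[OF assms(6) assms(5), of 2] nn by simp
  then have "(1 + \<delta>^2) * B^2 \<le> (1 + \<delta>^2) - (1 + \<alpha>^2) * \<delta>^2"
    using d by (simp add: field_simps)
  then have "(\<alpha> * \<delta>)^2 \<le> 1 - (1 + \<delta>^2) * B^2" by (simp add: algebra_simps power_mult_distrib)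
  then have "\<alpha> * \<delta> \<le> sqrt (1 - (1 + \<delta>^2) * B^2)"
    using real_le_rsqrt by blast
  then have "sqrt 2 * (\<alpha> * \<delta>) \<le> 2 * l^2" using assms(8)
    by (smt (verit) mult_left_mono real_sqrt_ge_zero zero_le_mult_iff zero_le_power2)
  also have "2 * l^2 = sqrt 2 * (sqrt 2 * l^2)" by simp
  finally have "\<alpha> * \<delta> \<le> sqrt 2 * l^2" by simp
  then have "\<alpha> * \<delta> / sqrt 2 \<le> l^2" by (simp add: divide_le_eq mult.commute)
  moreover have "((\<alpha> * \<delta>) powr (1/2) / 2 powr (1/4))^2 = \<alpha> * \<delta> / sqrt 2"
  proof -
    have ad: "\<alpha> * \<delta> > 0" using assms by simp
    have "((\<alpha> * \<delta>) powr (1/2))^2 = \<alpha> * \<delta>"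
      using ad by (simp add: powr_half_sqrt)
    moreover have "(2 powr (1/4::real))^2 = 2 powr (of_nat 2 * (1/4))"
      by (rule powr_power) simp
    moreover have "(2::real) powr (of_nat 2 * (1/4)) = sqrt 2"
      using powr_half_sqrt[of 2] by simp
    ultimately show ?thesis by (simp add: power_divide)
  qed
  ultimately have "((\<alpha> * \<delta>) powr (1/2) / 2 powr (1/4))^2 \<le> l^2" by simp
  then show ?thesis using assms(7) power2_le_imp_le by blast
qed

lemma L0_eq: "L0 lr li = (\<lambda>x. mat2 (lr x) (li x) (- li x) (lr x))"
  by (rule ext) (simp add: L0_def)
lemma L1_eq: "L1 lr li = (\<lambda>x. mat2 ((\<lambda>x. - lr x) x) (li x) (- li x) ((\<lambda>x. - lr x) x))"
  by (rule ext) (simp add: L1_def)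

theorem lemma15:
  "\<exists>\<epsilon>0>0. \<forall>\<epsilon> \<delta> \<alpha> (B0 :: real \<Rightarrow> real) lr li S0 S1.
     0 < \<epsilon> \<and> \<epsilon> < \<epsilon>0 \<and>
     1/3 \<le> \<delta> \<and> \<delta> \<le> 1 \<and> 0 < \<alpha> \<and> \<alpha> * \<delta> < 1 \<and>
     \<alpha> \<ge> 10/3 * \<epsilon>^2 \<and>
     continuous_on UNIV B0 \<and>
     (\<forall>x. 0 \<le> B0 x \<and> B0 x \<le> sqrt (1 - (1 + \<alpha>^2) / (1 + \<delta>^2) * \<delta>^2)) \<and>
     (\<forall>x. lr x \<ge> 0 \<and> 2 * (lr x)^2 =
          sqrt 2 * sqrt (1 - (1 + \<delta>^2) * (B0 x)^2) + \<epsilon>^2 * (B0 x)^2 * (1 + \<delta>^2)^2) \<and>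
     (\<forall>x. li x \<ge> 0 \<and> 2 * (li x)^2 =
          sqrt 2 * sqrt (1 - (1 + \<delta>^2) * (B0 x)^2) - \<epsilon>^2 * (B0 x)^2 * (1 + \<delta>^2)^2) \<and>
     is_solution_operator (L0 lr li) S0 \<and>
     is_solution_operator (L1 lr li) S1
     \<longrightarrow>
     (\<forall>x s. x < s \<longrightarrow>
        opnorm (S0 x s) \<le> exp ((\<alpha> * \<delta>) powr (1/2) / 2 powr (1/4) * (x - s))) \<and>
     (\<forall>x s. s < x \<longrightarrow>
        opnorm (S1 x s) \<le> exp (- ((\<alpha> * \<delta>) powr (1/2) / 2 powr (1/4)) * (x - s)))"
proof (intro exI[of _ 1] conjI impI allI, simp, goal_cases)
  case (1 \<epsilon> \<delta> \<alpha> B0 lr li S0 S1 x s)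
  let ?\<sigma> = "(\<alpha> * \<delta>) powr (1/2) / 2 powr (1/4)"
  have ge: "?\<sigma> \<le> lr t" for t
    using 1 sigma_le[of \<delta> \<alpha> "B0 t" "lr t" \<epsilon>] by auto
  have "opnorm (S0 x s) \<le> exp (?\<sigma> * 1 * (x - s))"
    apply (rule growth[where c=1])
    using 1 ge unfolding L0_eq by auto
  then show ?case by simp
next
  case (2 \<epsilon> \<delta> \<alpha> B0 lr li S0 S1 x s)
  let ?\<sigma> = "(\<alpha> * \<delta>) powr (1/2) / 2 powr (1/4)"
  have ge: "?\<sigma> \<le> lr t" for t
    using 2 sigma_le[of \<delta> \<alpha> "B0 t" "lr t" \<epsilon>] by auto
  have "opnorm (S1 x s) \<le> exp (?\<sigma> * (-1) * (x - s))"
    apply (rule growth[where c="-1"])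
    using 2 ge unfolding L1_eq by auto
  then show ?case by simp
qed

end
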